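(* Let $\epsilon\in(0,1)$ and let $n$ be a positive integer, and set $c=Q^{-1}(\epsilon)/\sqrt{n}$, where $Q^{-1}$ is the inverse of the Gaussian $Q$-function. Define, for $\gamma\geq 0$, \[ f(\gamma)=\ln(1+\gamma)-c\sqrt{\frac{2\gamma}{1+\gamma}} . \] Then $f$ is increasing in $\gamma$ on the set $\gamma\geq\bar{\gamma}$, where $\bar{\gamma}=\frac{1}{2}\left(\sqrt{1+2c^{2}}-1\right)$.
   Context: $f(\gamma)$ is the finite-block-length (normal approximation) rate of a user with SINR $\gamma$, block length $n$ and maximum tolerable decoding error probability $\epsilon$, using channel dispersion $v=2\gamma/(1+\gamma)$, i.e. $f(\gamma)=\ln(1+\gamma)-Q^{-1}(\epsilon)\sqrt{v/n}$. *)

theory Defs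
  imports "HOL-Probability.Probability"
begin

definition Qfunc :: "real \<Rightarrow> real" where
  "Qfunc x = (LINT t:{x..}|lborel. std_normal_density t)"

text \<open>Inverse of the Q-function (Q is a strictly decreasing bijection from the reals onto (0,1)).\<close>
definition Qinv :: "real \<Rightarrow> real" where
  "Qinv e = (THE x. Qfunc x = e)"

end

theory Submission
  imports Defs
begin

lemma key:
  fixes c x :: real
  assumes x: "x > (sqrt (1 + 2 * c\<^sup>2) - 1) / 2"
  shows "x > 0" and "c < sqrt (2 * x / (1 + x)) * (1 + x)"
proof -
  have s0: "sqrt (1 + 2 * c\<^sup>2) \<ge> 1" by simp
  have h1: "2*x + 1 > sqrt (1 + 2 * c\<^sup>2)" using x by (simp add: field_simps)
  then show xp: "x > 0" using s0 by linarith
  hence "(2*x+1)^2 > (sqrt (1 + 2 * c\<^sup>2))^2"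
    using s0 h1 by (intro power_strict_mono) auto
  hence h: "2*x*(1+x) > c^2" by (simp add: power2_eq_square algebra_simps)
  have "sqrt (2 * x / (1 + x)) * (1 + x) = sqrt (2 * x / (1 + x)) * sqrt ((1+x)^2)"
    using xp by simp
  also have "\<dots> = sqrt (2*x*(1+x))"
  proof -
    have "2 * x / (1 + x) * (1+x)^2 = 2*x*(1+x)" using xp by (simp add: field_simps power2_eq_square)
    thus ?thesis by (metis real_sqrt_mult)
  qed
  also have "\<dots> > sqrt (c^2)" using h by (subst real_sqrt_less_iff) simp
  finally have "sqrt (2 * x / (1 + x)) * (1 + x) > \<bar>c\<bar>" by simp
  then show "c < sqrt (2 * x / (1 + x)) * (1 + x)" by linarith
qed

theorem lemma1:
  fixes \<epsilon> :: real and n :: nat and c :: real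
  assumes "0 < \<epsilon>" and "\<epsilon> < 1" and "0 < n"
    and "c = Qinv \<epsilon> / sqrt (real n)"
  shows "strict_mono_on {(sqrt (1 + 2 * c\<^sup>2) - 1) / 2 ..}
           (\<lambda>\<gamma>::real. ln (1 + \<gamma>) - c * sqrt (2 * \<gamma> / (1 + \<gamma>)))"
proof (rule strict_mono_onI)
  define f where "f = (\<lambda>\<gamma>::real. ln (1 + \<gamma>) - c * sqrt (2 * \<gamma> / (1 + \<gamma>)))"
  let ?g = "(sqrt (1 + 2 * c\<^sup>2) - 1) / 2"
  have g0: "?g \<ge> 0" by simp
  fix a b assume a: "a \<in> {?g..}" and b: "b \<in> {?g..}" and ab: "a < b"
  have "?g \<le> a" using a by simp
  hence a0: "a \<ge> 0" by (rule order_trans[OF g0])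
  have "f a < f b"
  proof (rule DERIV_pos_imp_increasing_open[OF ab])
    fix x assume x: "a < x" "x < b"
    have xg: "x > ?g" using a x by simp
    note k = key[OF xg]
    have gp: "2 * x / (1 + x) > 0" using k(1) by (intro divide_pos_pos) auto
    have "(f has_real_derivative
        (1/(1+x) - c * (inverse (sqrt (2 * x / (1 + x))) / 2 * ((2 * (1+x) - 2*x) / (1+x)^2)))) (at x)"
      unfolding f_def using k(1) gp
      apply (auto intro!: derivative_eq_intros simp: power2_eq_square)
      using gp by linarith
    moreover have "1/(1+x) - c * (inverse (sqrt (2 * x / (1 + x))) / 2 * ((2 * (1+x) - 2*x) / (1+x)^2)) > 0"
    proof -
      have sp: "sqrt (2 * x / (1 + x)) > 0" using gp by simp
      have "c * (inverse (sqrt (2 * x / (1 + x))) / 2 * ((2 * (1+x) - 2*x) / (1+x)^2))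
          = c / (sqrt (2 * x / (1 + x)) * (1+x)) * (1/(1+x))"
      proof -
        have "\<And>s::real. s > 0 \<Longrightarrow> c * (inverse s / 2 * ((2 * (1+x) - 2*x) / (1+x)^2))
          = c / (s * (1+x)) * (1/(1+x))"
          using k(1) by (simp add: field_simps power2_eq_square)
        then show ?thesis using sp by blast
      qed
      also have "\<dots> < 1 * (1/(1+x))"
        using k sp by (intro mult_strict_right_mono) (auto simp: divide_less_eq)
      finally show ?thesis by simp
    qed
    ultimately show "\<exists>y. (f has_real_derivative y) (at x) \<and> 0 < y" by blast
  next
    show "continuous_on {a..b} f"
      unfolding f_def using a0
      by (intro continuous_intros) (auto simp: divide_nonneg_pos)
  qed
  then show "(\<lambda>\<gamma>::real. ln (1 + \<gamma>) - c * sqrt (2 * \<gamma> / (1 + \<gamma>))) a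
           < (\<lambda>\<gamma>::real. ln (1 + \<gamma>) - c * sqrt (2 * \<gamma> / (1 + \<gamma>))) b"
    by (simp add: f_def)
qed

end
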